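(* For every integer $n\ge0$, \[ \sum_{k=0}^n B_{n-k}^{(-k)} = \frac{(-1)^{n+1}}{2}\sum_{j=1}^{n+1}(-1)^j\, j!\, \left\{ {n+1 \atop j} \right\}\frac{\binom{2j}{j}}{3^{j-1}}\sum_{i=0}^{j-1}\frac{3^i}{(2i+1)\binom{2i}{i}}. \]
   Context: $\left\{ {n \atop j} \right\}$ denotes the Stirling number of the second kind. For an integer $k$, $\mathrm{Li}_k(z)=\sum_{m\ge1} z^m/m^k$, and the poly-Bernoulli numbers $B_n^{(k)}\in\mathbb{Q}$ are defined by $\sum_{n\ge0} B_n^{(k)} \frac{t^n}{n!} = \frac{\mathrm{Li}_k(1-e^{-t})}{1-e^{-t}}$. *)

theory Defs
  imports "HOL-Combinatorics.Stirling" "HOL-Computational_Algebra.Formal_Power_Series"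
begin

definition one_minus_exp_neg :: "rat fps" where
  "one_minus_exp_neg = 1 - fps_exp (-1)"

text \<open>The formal power series Li_k(u)/u = sum over m >= 1 of u^(m-1) / m^k.
  Since u has zero constant term, u^(m-1) has order m-1, so the coefficient
  of t^n only receives contributions from m = 1..n+1.\<close>
definition polyBern_gf :: "int \<Rightarrow> rat fps" where
  "polyBern_gf k = Abs_fps (\<lambda>n. \<Sum>m=1..n+1.
      fps_nth (one_minus_exp_neg ^ (m - 1)) n / (of_nat m) powi k)"

text \<open>Poly-Bernoulli numbers: sum_n B_n^(k) t^n/n! = Li_k(1-e^-t)/(1-e^-t).\<close>
definition polyBernoulli :: "nat \<Rightarrow> int \<Rightarrow> rat" where
  "polyBernoulli n k = fact n * fps_nth (polyBern_gf k) n"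

end

theory Submission
  imports Defs
begin


definition beta :: "nat \<Rightarrow> nat \<Rightarrow> rat" where
  "beta a m = (-1)^(m+a) * fact a * of_nat (Stirling m a)"

lemma u0: "fps_nth one_minus_exp_neg 0 = 0"
  by (simp add: one_minus_exp_neg_def)

lemma uderiv: "fps_deriv one_minus_exp_neg = 1 - one_minus_exp_neg"
proof -
  have "fps_const (-1::rat) = -1" by (simp flip: fps_const_neg)
  then show ?thesis by (simp add: one_minus_exp_neg_def)
qed

lemma upow_deriv: "fps_deriv (one_minus_exp_neg ^ Suc b) =
   of_nat (Suc b) * (one_minus_exp_neg ^ b - one_minus_exp_neg ^ Suc b)"
proof -
  have "fps_deriv (one_minus_exp_neg ^ Suc b) = of_nat (Suc b) * fps_deriv one_minus_exp_neg * one_minus_exp_neg ^ b"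
    by (simp only: fps_deriv_power') simp
  then show ?thesis by (simp add: uderiv algebra_simps del: of_nat_Suc)
qed

lemma coeff_upow: "fact m * fps_nth (one_minus_exp_neg ^ a) (m) = beta a m"
proof (induction a arbitrary: m)
  case 0
  then show ?case by (cases m) (simp_all add: beta_def)
next
  case (Suc b)
  note IHb = Suc.IH
  show ?case
  proof (induction m)
    case 0
    then show ?case by (simp add: beta_def u0 fps_mult_nth_0 del: power_Suc)
  next
    case (Suc p)
    have "of_nat (Suc p) * fps_nth (one_minus_exp_neg ^ Suc b) (Suc p)
        = fps_nth (fps_deriv (one_minus_exp_neg ^ Suc b)) p"
      by (simp only: fps_deriv_nth) simp
    also have "\<dots> = of_nat (Suc b) * (fps_nth (one_minus_exp_neg ^ b) (p) - fps_nth (one_minus_exp_neg ^ Suc b) (p))"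
      unfolding upow_deriv by (simp add: fps_of_nat[symmetric] del: of_nat_Suc power_Suc)
    finally have e: "of_nat (Suc p) * fps_nth (one_minus_exp_neg ^ Suc b) (Suc p) =
        of_nat (Suc b) * (fps_nth (one_minus_exp_neg ^ b) (p) - fps_nth (one_minus_exp_neg ^ Suc b) (p))" .
    have "fact (Suc p) * fps_nth (one_minus_exp_neg ^ Suc b) (Suc p)
       = fact p * (of_nat (Suc p) * fps_nth (one_minus_exp_neg ^ Suc b) (Suc p))"
      by (simp add: algebra_simps del: power_Suc)
    also have "\<dots> = of_nat (Suc b) * (fact p * fps_nth (one_minus_exp_neg ^ b) (p) - fact p * fps_nth (one_minus_exp_neg ^ Suc b) (p))"
      unfolding e by (simp add: algebra_simps)
    also have "\<dots> = of_nat (Suc b) * (beta b p - beta (Suc b) p)"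
      using IHb[of p] Suc.IH by (simp del: power_Suc)
    also have "\<dots> = beta (Suc b) (Suc p)"
      by (simp add: beta_def algebra_simps)
    finally show ?case .
  qed
qed



lemma pb: "polyBernoulli m (- int k) = (\<Sum>a=0..m. beta a m * of_nat (a+1)^k)"
proof -
  have "polyBernoulli m (- int k) = fact m * (\<Sum>mm=1..m+1.
      fps_nth (one_minus_exp_neg ^ (mm - 1)) m / (of_nat mm) powi (- int k))"
    by (simp add: polyBernoulli_def polyBern_gf_def)
  also have "\<dots> = (\<Sum>mm=1..m+1. fact m * fps_nth (one_minus_exp_neg ^ (mm - 1)) m * of_nat mm ^ k)"
    by (simp add: sum_distrib_left power_int_minus divide_inverse algebra_simps)
  also have "\<dots> = (\<Sum>a=0..m. fact m * fps_nth (one_minus_exp_neg ^ a) m * of_nat (a+1) ^ k)"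
    unfolding One_nat_def add_Suc_right add_0_right sum.shift_bounds_cl_Suc_ivl by simp
  also have "\<dots> = (\<Sum>a=0..m. beta a m * of_nat (a+1)^k)"
    by (simp add: coeff_upow)
  finally show ?thesis .
qed

lemma beta_zero: "m < a \<Longrightarrow> beta a m = 0"
  by (simp add: beta_def)

lemma beta_Suc: "beta j (Suc N) = - of_nat j * beta j N + (if j = 0 then 0 else of_nat j * beta (j-1) N)"
  by (cases j) (simp_all add: beta_def algebra_simps)

definition alpha :: "nat \<Rightarrow> nat \<Rightarrow> rat" where
  "alpha a j = (if a < j then fact a * fact (j+a) / (fact (2*a+1) * fact j) else 0)"

lemma alpha_rec: "of_nat (Suc i) * alpha a (Suc i) = of_nat (i + a + 1) * alpha a i + (if i = a then 1 else 0)"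
proof (cases "a < i")
  case True
  then show ?thesis
    by (simp add: alpha_def field_simps del: of_nat_Suc)
next
  case False
  then consider "i < a" | "i = a" by linarith
  then show ?thesis
  proof cases
    case 1 then show ?thesis by (simp add: alpha_def)
  next
    case 2
    have "Suc i + a = Suc (2*a)" "i + a + 1 = 2*a+1" using 2 by simp_all
    then show ?thesis using 2 by (simp add: alpha_def field_simps mult_2_right del: of_nat_Suc)
  qed
qed



lemma rhs_step: "(\<Sum>j\<le>Suc N. alpha a j * beta j (Suc N)) =
   of_nat (a+1) * (\<Sum>j\<le>N. alpha a j * beta j N) + beta a N"
proof -
  have "(\<Sum>j\<le>Suc N. alpha a j * beta j (Suc N)) =
     (\<Sum>j\<le>Suc N. - (of_nat j * alpha a j * beta j N)) +
     (\<Sum>j\<le>Suc N. (if j = 0 then 0 else of_nat j * alpha a j * beta (j-1) N))"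
    unfolding sum.distrib[symmetric] by (rule sum.cong) (simp_all add: beta_Suc algebra_simps)
  also have "(\<Sum>j\<le>Suc N. - (of_nat j * alpha a j * beta j N)) = (\<Sum>j\<le>N. - (of_nat j * alpha a j * beta j N))"
    by (simp add: beta_zero)
  also have "(\<Sum>j\<le>Suc N. (if j = 0 then 0 else of_nat j * alpha a j * beta (j-1) N))
      = (\<Sum>j\<le>N. of_nat (Suc j) * alpha a (Suc j) * beta j N)"
    by (subst sum.atMost_Suc_shift) simp
  also have "(\<Sum>j\<le>N. - (of_nat j * alpha a j * beta j N)) + (\<Sum>j\<le>N. of_nat (Suc j) * alpha a (Suc j) * beta j N)
     = (\<Sum>j\<le>N. (of_nat (Suc j) * alpha a (Suc j) - of_nat j * alpha a j) * beta j N)"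
    by (simp add: sum.distrib[symmetric] algebra_simps)
  also have "\<dots> = (\<Sum>j\<le>N. (of_nat (a+1) * alpha a j + (if j = a then 1 else 0)) * beta j N)"
    apply (rule sum.cong)
     apply (simp_all add: alpha_rec algebra_simps del: of_nat_Suc)
    apply (simp add: algebra_simps)
    done
  also have "\<dots> = of_nat (a+1) * (\<Sum>j\<le>N. alpha a j * beta j N) + (\<Sum>j\<le>N. (if j = a then beta j N else 0))"
    unfolding sum_distrib_left sum.distrib[symmetric] by (rule sum.cong) (simp_all add: algebra_simps)
  also have "(\<Sum>j\<le>N. (if j = a then beta j N else 0)) = beta a N"
    by (simp add: beta_zero)
  finally show ?thesis .
qed

lemma T: "(\<Sum>mm<N. beta a mm * of_nat (a+1)^(N-1-mm)) = (\<Sum>j\<le>N. alpha a j * beta j N)"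
proof (induction N)
  case 0
  then show ?case by (simp add: alpha_def)
next
  case (Suc N)
  have "(\<Sum>mm<Suc N. beta a mm * of_nat (a+1)^(Suc N-1-mm)) =
      (\<Sum>mm<N. beta a mm * of_nat (a+1)^(N-mm)) + beta a N"
    by simp
  also have "(\<Sum>mm<N. beta a mm * of_nat (a+1)^(N-mm)) = of_nat (a+1) * (\<Sum>mm<N. beta a mm * of_nat (a+1)^(N-1-mm))"
    unfolding sum_distrib_left
  proof (rule sum.cong)
    fix x assume "x \<in> {..<N}"
    then have "N - x = Suc (N-1-x)" by auto
    then show "beta a x * of_nat (a+1)^(N-x) = of_nat (a+1) * (beta a x * of_nat (a+1)^(N-1-x))"
      by (simp only: power_Suc) (simp add: algebra_simps)
  qed simp
  finally show ?case using Suc.IH rhs_step by simp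
qed



definition g :: "nat \<Rightarrow> nat \<Rightarrow> rat" where
  "g j a = fact a * fact (j+a) / fact (2*a)"

lemma g_step: "g j (Suc a) - g j a = fact a * fact (j+a) / fact (2*a+1) * (of_nat j - 3 * of_nat a - 1) / 2"
proof -
  define x where "x = (of_nat a :: rat)"
  define y where "y = (of_nat j :: rat)"
  define A where "A = (fact a :: rat)"
  define B where "B = (fact (j+a) :: rat)"
  define C where "C = (fact (2*a) :: rat)"
  have e1: "fact (2 * Suc a) = (2*x+2) * (2*x+1) * C"
    by (simp add: algebra_simps x_def C_def)
  have e2: "fact (2*a+1) = (2*x+1) * C" by (simp add: x_def C_def)
  have e3: "fact (j + Suc a) = (y+x+1) * B" by (simp add: x_def y_def B_def algebra_simps)
  have e4: "fact (Suc a) = (x+1) * A" by (simp add: A_def x_def algebra_simps)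
  have C0: "C \<noteq> 0" unfolding C_def by simp
  have x0: "x \<ge> 0" unfolding x_def by simp
  have n1: "2*x+1 \<noteq> 0" "2*x+2 \<noteq> 0" "x + 1 \<noteq> 0" using x0 by linarith+
  have "g j (Suc a) - g j a = (x+1) * A * ((y+x+1) * B) / ((2*x+2) * (2*x+1) * C) - A * B / C"
    unfolding g_def e1 e3 e4 A_def B_def C_def by simp
  also have "\<dots> = A * B * (y+x+1) / (2 * ((2*x+1) * C)) - A * B / C"
  proof -
    have d: "(2*x+2) * (2*x+1) * C = (x+1) * (2 * ((2*x+1) * C))" by (simp add: algebra_simps)
    have n: "(x+1) * A * ((y+x+1) * B) = (x+1) * (A * B * (y+x+1))" by (simp add: algebra_simps)
    show ?thesis unfolding d n using n1(3) by (subst nonzero_mult_divide_mult_cancel_left) simp_all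
  qed
  also have "\<dots> = A * B / ((2*x+1) * C) * (y - 3 * x - 1) / 2"
  proof -
    have "A * B / C = A * B * (2 * (2*x+1)) / (2 * ((2*x+1) * C))" using n1 by (simp add: ac_simps)
    then show ?thesis by (simp add: diff_divide_distrib[symmetric] algebra_simps)
  qed
  finally show ?thesis unfolding e2 A_def B_def x_def y_def C_def by simp
qed

lemma tele: "(\<Sum>a<j. (3 * of_nat a + 1 - of_nat j) * alpha a j) = 0"
proof -
  have "(\<Sum>a<j. (3 * of_nat a + 1 - of_nat j) * alpha a j) = (\<Sum>a<j. (-2 / fact j) * (g j (Suc a) - g j a))"
  proof (rule sum.cong)
    fix a assume "a \<in> {..<j}"
    then have "a < j" by simp
    define A where "A = (fact a * fact (j+a) / fact (2*a+1) :: rat)"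
    have "(3 * of_nat a + 1 - of_nat j) * alpha a j = (3 * of_nat a + 1 - of_nat j) * A / fact j"
      using \<open>a < j\<close> by (simp add: alpha_def A_def)
    also have "\<dots> = (-2 / fact j) * (A * (of_nat j - 3 * of_nat a - 1) / 2)"
      by (simp add: field_simps)
    also have "\<dots> = (-2 / fact j) * (g j (Suc a) - g j a)"
      unfolding g_step A_def by simp
    finally show "(3 * of_nat a + 1 - of_nat j) * alpha a j = (-2 / fact j) * (g j (Suc a) - g j a)" .
  qed simp
  also have "\<dots> = (-2 / fact j) * (g j j - g j 0)"
    by (simp only: sum_distrib_left[symmetric] sum_lessThan_telescope)
  also have "\<dots> = 0" by (simp add: g_def mult_2)
  finally show ?thesis .
qed

definition e :: "nat \<Rightarrow> rat" where "e j = (\<Sum>a<j. alpha a j)"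

lemma e_rec: "of_nat (Suc j) * e (Suc j) = 2/3 * of_nat (2*j+1) * e j + 1"
proof -
  have "of_nat (Suc j) * e (Suc j) = (\<Sum>a<Suc j. of_nat (j+a+1) * alpha a j + (if j = a then 1 else 0))"
    unfolding e_def sum_distrib_left
    by (rule sum.cong[OF refl]) (simp only: alpha_rec eq_commute)
  also have "\<dots> = (\<Sum>a<j. of_nat (j+a+1) * alpha a j) + 1"
    by (simp add: sum.distrib alpha_def)
  also have "(\<Sum>a<j. of_nat (j+a+1) * alpha a j) = 2/3 * of_nat (2*j+1) * e j"
  proof -
    have "3 * (\<Sum>a<j. of_nat (j+a+1) * alpha a j) - 2 * of_nat (2*j+1) * e j
       = (\<Sum>a<j. (3 * of_nat a + 1 - of_nat j) * alpha a j)"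
      unfolding e_def sum_distrib_left sum_subtractf[symmetric]
      by (rule sum.cong) (simp_all add: algebra_simps)
    then show ?thesis using tele by simp
  qed
  finally show ?thesis .
qed



definition cen :: "nat \<Rightarrow> rat" where "cen n = of_nat ((2*n) choose n)"

lemma cen_fact: "cen n = fact (2*n) / (fact n * fact n)"
  unfolding cen_def by (subst binomial_fact) (simp_all add: mult_2)

lemma cen_pos: "cen n > 0"
  unfolding cen_fact by simp

lemma cen_rec: "of_nat (Suc n) * cen (Suc n) = 2 * of_nat (2*n+1) * cen n"
proof -
  define x where "x = (of_nat n :: rat)"
  define F where "F = (fact (2*n) :: rat)"
  define G where "G = (fact n :: rat)"
  have e1: "fact (2 * Suc n) = (2*x+2) * (2*x+1) * F"
    by (simp add: algebra_simps x_def F_def)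
  have e2: "fact (Suc n) = (x+1) * G" by (simp add: G_def x_def algebra_simps)
  have e0: "(of_nat (Suc n)::rat) = x+1" by (simp add: x_def)
  have G0: "G \<noteq> 0" unfolding G_def by simp
  have x0: "x \<ge> 0" unfolding x_def by simp
  have n1: "x + 1 \<noteq> 0" using x0 by linarith
  have "of_nat (Suc n) * cen (Suc n) = (x+1) * ((2*x+2) * (2*x+1) * F / ((x+1) * G * ((x+1) * G)))"
    unfolding cen_fact e1 e2 e0 by simp
  also have "\<dots> = ((x+1)*(x+1)) * (2*(2*x+1)*F) / (((x+1)*(x+1)) * (G*G))"
    by (simp add: algebra_simps)
  also have "\<dots> = 2 * (2*x+1) * (F / (G * G))"
    using n1 by (subst nonzero_mult_divide_mult_cancel_left) simp_all
  finally show ?thesis unfolding cen_fact F_def G_def x_def by simp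
qed

definition S :: "nat \<Rightarrow> rat" where
  "S k = (\<Sum>i=0..k. 3 ^ i / (of_nat (2 * i + 1) * cen i))"

definition c :: "nat \<Rightarrow> rat" where
  "c k = cen (Suc k) / 3 ^ k * S k"

lemma c_rec: "of_nat (Suc (Suc k)) * c (Suc k) = 2/3 * of_nat (2*(Suc k)+1) * c k + 2"
proof -
  have c0: "cen (Suc k) \<noteq> 0" using cen_pos[of "Suc k"] by simp
  have "of_nat (Suc (Suc k)) * c (Suc k) = 2 * of_nat (2*(Suc k)+1) * cen (Suc k) / 3 ^ Suc k *
      (S k + 3 ^ Suc k / (of_nat (2 * Suc k + 1) * cen (Suc k)))"
  proof -
    have S1: "S (Suc k) = S k + 3 ^ Suc k / (of_nat (2 * Suc k + 1) * cen (Suc k))"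
      unfolding S_def by (rule sum.atLeast0_atMost_Suc)
    have "of_nat (Suc (Suc k)) * c (Suc k) = (of_nat (Suc (Suc k)) * cen (Suc (Suc k))) / 3 ^ Suc k * S (Suc k)"
      unfolding c_def by simp
    then show ?thesis unfolding cen_rec S1 .
  qed
  also have "\<dots> = 2/3 * of_nat (2*(Suc k)+1) * c k + 2"
    unfolding c_def using c0 by (simp add: field_simps del: of_nat_Suc)
  finally show ?thesis .
qed

lemma e_c: "e (Suc k) = c k / 2"
proof (induction k)
  case 0
  then show ?case by (simp add: e_def c_def alpha_def S_def cen_def)
next
  case (Suc k)
  have "of_nat (Suc (Suc k)) * e (Suc (Suc k)) = 2/3 * of_nat (2*(Suc k)+1) * e (Suc k) + 1"
    by (rule e_rec)
  also have "\<dots> = of_nat (Suc (Suc k)) * (c (Suc k) / 2)"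
    using c_rec[of k] Suc.IH by (simp add: field_simps del: of_nat_Suc)
  finally show ?case by (simp del: of_nat_Suc)
qed



theorem corollary3p6:
  fixes n :: nat
  shows "(\<Sum>k=0..n. polyBernoulli (n - k) (- int k)) =
    ((-1) ^ (n + 1) / 2) *
      (\<Sum>j=1..n+1. (-1) ^ j * fact j * of_nat (Stirling (n + 1) j)
         * of_nat ((2 * j) choose j) / 3 ^ (j - 1)
         * (\<Sum>i=0..j-1. 3 ^ i / (of_nat (2 * i + 1) * of_nat ((2 * i) choose i))))"
proof -
  have "(\<Sum>k=0..n. polyBernoulli (n - k) (- int k)) = (\<Sum>k=0..n. \<Sum>a=0..n. beta a (n-k) * of_nat (a+1)^k)"
  proof (rule sum.cong[OF refl])
    fix k assume k: "k \<in> {0..n}"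
    show "polyBernoulli (n - k) (- int k) = (\<Sum>a=0..n. beta a (n-k) * of_nat (a+1)^k)"
      unfolding pb
      by (rule sum.mono_neutral_left) (use k in \<open>auto simp: beta_zero\<close>)
  qed
  also have "\<dots> = (\<Sum>m=0..n. \<Sum>a=0..n. beta a m * of_nat (a+1)^(n-m))"
    by (subst sum.atLeastAtMost_rev) simp
  also have "\<dots> = (\<Sum>a=0..n. \<Sum>m<Suc n. beta a m * of_nat (a+1)^(Suc n - 1 - m))"
    by (subst sum.swap) (simp add: atLeast0AtMost lessThan_Suc_atMost)
  also have "\<dots> = (\<Sum>a=0..n. \<Sum>j\<le>Suc n. alpha a j * beta j (Suc n))"
    by (simp only: T)
  also have "\<dots> = (\<Sum>j\<le>Suc n. beta j (Suc n) * (\<Sum>a=0..n. alpha a j))"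
    by (subst sum.swap) (simp add: sum_distrib_left algebra_simps)
  also have "\<dots> = (\<Sum>j\<le>Suc n. beta j (Suc n) * e j)"
  proof (rule sum.cong[OF refl])
    fix j assume j: "j \<in> {..Suc n}"
    have "(\<Sum>a=0..n. alpha a j) = (\<Sum>a<j. alpha a j)"
      by (rule sum.mono_neutral_right) (use j in \<open>auto simp: alpha_def\<close>)
    then show "beta j (Suc n) * (\<Sum>a=0..n. alpha a j) = beta j (Suc n) * e j"
      by (simp add: e_def)
  qed
  also have "\<dots> = (\<Sum>j=1..n+1. beta j (Suc n) * e j)"
    by (simp add: atMost_atLeast0 sum.atLeast_Suc_atMost beta_def)
  also have "\<dots> = (\<Sum>j=1..n+1. (-1) ^ (n + 1) / 2 * ((-1) ^ j * fact j * of_nat (Stirling (n + 1) j)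
         * of_nat ((2 * j) choose j) / 3 ^ (j - 1)
         * (\<Sum>i=0..j-1. 3 ^ i / (of_nat (2 * i + 1) * of_nat ((2 * i) choose i)))))"
  proof (rule sum.cong[OF refl])
    fix j assume j: "j \<in> {1..n+1}"
    then obtain k where jk: "j = Suc k" by (cases j) auto
    show "beta j (Suc n) * e j = (-1) ^ (n + 1) / 2 * ((-1) ^ j * fact j * of_nat (Stirling (n + 1) j)
         * of_nat ((2 * j) choose j) / 3 ^ (j - 1)
         * (\<Sum>i=0..j-1. 3 ^ i / (of_nat (2 * i + 1) * of_nat ((2 * i) choose i))))"
      unfolding jk e_c by (simp add: beta_def c_def S_def cen_def power_add)
  qed
  also have "\<dots> = ((-1) ^ (n + 1) / 2) *
      (\<Sum>j=1..n+1. (-1) ^ j * fact j * of_nat (Stirling (n + 1) j)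
         * of_nat ((2 * j) choose j) / 3 ^ (j - 1)
         * (\<Sum>i=0..j-1. 3 ^ i / (of_nat (2 * i + 1) * of_nat ((2 * i) choose i))))"
    by (rule sum_distrib_left[symmetric])
  finally show ?thesis .
qed

end
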